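(* Let $\mathcal{T}$ be a conforming simplicial mesh in $\mathbb{R}^d$ with nodes $\{\mathbf{x}_i\}$ and adjacency matrix $\mathbf{A}$ ($\mathbf{A}_{i,j}=1$ iff nodes $i\neq j$ are joined by an edge of some cell, and $0$ otherwise). For a point $\mathbf{x}$ in a cell $T$ with vertex set $\mathcal{N}^0(T)$, define for each node $i$ $$\eta_i(\mathbf{x})=\sum_{n\in\mathcal{N}^0(T)} B_n(\mathbf{x})\,\mathbf{A}_{i,n},$$ where $B_n(\mathbf{x})$ is the barycentric coordinate of $\mathbf{x}$ with respect to vertex $n$ of $T$. Let $T_o$ and $T_n$ be two cells sharing a facet $F$, let $\mathcal{N}^1_o,\mathcal{N}^1_n$ be their 1-ring neighbour sets, $\mathcal{N}^1_r=\mathcal{N}^1_o\setminus\mathcal{N}^1_n$ and $\mathcal{N}^1_a=\mathcal{N}^1_n\setminus\mathcal{N}^1_o$. Then $\eta$ is locally diminishing on added/removed nodes: for a point crossing $F$ from $\mathbf{x}^o\in T_o$ to $\mathbf{x}^n\in T_n$ with $\|\mathbf{x}^n-\mathbf{x}^o\|=\mathcal{O}(\epsilon)$, one has $\eta_i(\mathbf{x}^o)=\mathcal{O}(\epsilon)$ for every $i\in\mathcal{N}^1_r$ (computed in $T_o$) and $\eta_i(\mathbf{x}^n)=\mathcal{O}(\epsilon)$ for every $i\in\mathcal{N}^1_a$ (computed in $T_n$).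
   Context: The 1-ring neighbour set $\mathcal{N}^1$ of a cell consists of all mesh nodes that are vertices of the cell or are joined by a mesh edge to a vertex of the cell. Barycentric coordinates of $\mathbf{x}$ in a simplex with vertices $\mathbf{x}_{n_1},\dots,\mathbf{x}_{n_{d+1}}$ are the unique numbers $B_{n_k}(\mathbf{x})$ with $\sum_k B_{n_k}=1$ and $\sum_k B_{n_k}\mathbf{x}_{n_k}=\mathbf{x}$. The constants in $\mathcal{O}(\epsilon)$ depend only on the mesh (e.g. on the distances of the vertices of $T_o,T_n$ opposite $F$ to the facet $F$). *)

theory Defs
  imports "HOL-Analysis.Analysis"
begin

text \<open>A simplicial mesh: node positions X (indexed by an abstract node type 'i),
  cells given by their vertex index sets.\<close>

definition conforming_simplicial_mesh :: "('i \<Rightarrow> 'a::euclidean_space) \<Rightarrow> 'i set set \<Rightarrow> bool" where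
  "conforming_simplicial_mesh X cells \<longleftrightarrow>
     finite cells \<and> inj_on X (\<Union>cells) \<and>
     (\<forall>T\<in>cells. card T = DIM('a) + 1 \<and> \<not> affine_dependent (X ` T)) \<and>
     (\<forall>T1\<in>cells. \<forall>T2\<in>cells.
        convex hull (X ` T1) \<inter> convex hull (X ` T2) = convex hull (X ` (T1 \<inter> T2)))"

definition adj :: "'i set set \<Rightarrow> 'i \<Rightarrow> 'i \<Rightarrow> real" where
  "adj cells i j = (if i \<noteq> j \<and> (\<exists>T\<in>cells. i \<in> T \<and> j \<in> T) then 1 else 0)"

definition bary :: "('i \<Rightarrow> 'a::real_vector) \<Rightarrow> 'i set \<Rightarrow> 'a \<Rightarrow> 'i \<Rightarrow> real" where
  "bary X T x = (THE B. (\<forall>n. n \<notin> T \<longrightarrow> B n = 0) \<and> sum B T = 1 \<and>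
                        (\<Sum>n\<in>T. B n *\<^sub>R X n) = x)"

definition eta :: "('i \<Rightarrow> 'a::real_vector) \<Rightarrow> 'i set set \<Rightarrow> 'i set \<Rightarrow> 'i \<Rightarrow> 'a \<Rightarrow> real" where
  "eta X cells T i x = (\<Sum>n\<in>T. bary X T x n * adj cells i n)"

definition one_ring :: "'i set set \<Rightarrow> 'i set \<Rightarrow> 'i set" where
  "one_ring cells T = {j \<in> \<Union>cells. j \<in> T \<or> (\<exists>v\<in>T. adj cells j v = 1)}"

end

theory Submission
  imports Defs
begin

definition isco :: "('i \<Rightarrow> 'a::real_vector) \<Rightarrow> 'i set \<Rightarrow> 'a \<Rightarrow> ('i \<Rightarrow> real) \<Rightarrow> bool" where
  "isco X T x B \<longleftrightarrow> (\<forall>n. n \<notin> T \<longrightarrow> B n = 0) \<and> sum B T = 1 \<and> (\<Sum>n\<in>T. B n *\<^sub>R X n) = x"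

lemma isco_uniq:
  assumes fin: "finite T" and inj: "inj_on X T" and ind: "\<not> affine_dependent (X ` T)"
    and B: "isco X T x B" and B': "isco X T x B'"
  shows "B = B'"
proof (rule ccontr)
  assume ne: "B \<noteq> B'"
  define D where "D = (\<lambda>n. B n - B' n)"
  from ne obtain n where "B n \<noteq> B' n" by auto
  have nT: "n \<in> T" using \<open>B n \<noteq> B' n\<close> B B' unfolding isco_def by metis
  have Dn: "D n \<noteq> 0" using \<open>B n \<noteq> B' n\<close> by (simp add: D_def)
  define u where "u = (\<lambda>y. D (inv_into T X y))"
  have s1: "sum u (X ` T) = sum D T"
    using inj by (simp add: sum.reindex u_def)
  have s2: "sum D T = 0" using B B' by (simp add: isco_def D_def sum_subtractf)
  have s3: "(\<Sum>v\<in>X ` T. u v *\<^sub>R v) = (\<Sum>n\<in>T. D n *\<^sub>R X n)"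
    using inj by (simp add: sum.reindex u_def)
  have s4: "(\<Sum>n\<in>T. D n *\<^sub>R X n) = 0"
    using B B' by (simp add: isco_def D_def scaleR_diff_left sum_subtractf)
  have "X n \<in> X ` T" "u (X n) \<noteq> 0" using nT Dn inj by (auto simp: u_def)
  then have "affine_dependent (X ` T)"
  proof -
    have "sum u (X ` T) = 0 \<and> (\<exists>v\<in>X ` T. u v \<noteq> 0) \<and> (\<Sum>v\<in>X ` T. u v *\<^sub>R v) = 0"
      using s1 s2 s3 s4 \<open>X n \<in> X ` T\<close> \<open>u (X n) \<noteq> 0\<close> by metis
    then show ?thesis
      unfolding affine_dependent_explicit_finite[OF finite_imageI[OF fin]] by blast
  qed
  with ind show False by simp
qed

lemma bary_eq:
  assumes fin: "finite T" and inj: "inj_on X T" and ind: "\<not> affine_dependent (X ` T)"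
    and B: "isco X T x B"
  shows "bary X T x = B"
proof -
  have "bary X T x = (THE C. isco X T x C)" unfolding bary_def isco_def ..
  also have "\<dots> = B"
  proof (rule the_equality)
    show "isco X T x B" by (rule B)
  next
    fix C assume "isco X T x C"
    then show "C = B" by (rule sym[OF isco_uniq[OF fin inj ind B]])
  qed
  finally show ?thesis .
qed

lemma bary_isco:
  fixes X :: "'i \<Rightarrow> 'a::euclidean_space"
  assumes fin: "finite T" and inj: "inj_on X T" and ind: "\<not> affine_dependent (X ` T)"
    and card: "card T = DIM('a) + 1"
  shows "isco X T x (bary X T x)"
proof -
  have "card (X ` T) = DIM('a) + 1" using card inj by (simp add: card_image)
  then have "aff_dim (X ` T) = DIM('a)" using aff_dim_affine_independent[OF ind] by simp
  then have "affine hull (X ` T) = UNIV" using aff_dim_eq_full by blast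
  then have "x \<in> affine hull (X ` T)" by simp
  then obtain u where u: "sum u (X ` T) = 1" "(\<Sum>v\<in>X ` T. u v *\<^sub>R v) = x"
    using affine_hull_finite[of "X ` T"] fin by auto
  define B where "B = (\<lambda>n. if n \<in> T then u (X n) else 0)"
  have "isco X T x B"
    using u inj by (simp add: isco_def B_def sum.reindex)
  then show ?thesis using bary_eq[OF fin inj ind] by simp
qed

lemma one_side:
  fixes X :: "'i \<Rightarrow> 'a::euclidean_space"
  assumes mesh: "conforming_simplicial_mesh X cells"
    and To: "To \<in> cells" and Tn: "Tn \<in> cells"
    and cI: "card (To \<inter> Tn) = DIM('a)"
  shows "\<exists>K. \<forall>xo\<in>convex hull (X ` To). \<forall>xn\<in>convex hull (X ` Tn).
           \<forall>i\<in>one_ring cells To - one_ring cells Tn. \<bar>eta X cells To i xo\<bar> \<le> K * norm (xn - xo)"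
proof -
  have cTo: "card To = DIM('a)+1" and indo: "\<not> affine_dependent (X ` To)"
    using mesh To unfolding conforming_simplicial_mesh_def by auto
  have cTn: "card Tn = DIM('a)+1"
    using mesh Tn unfolding conforming_simplicial_mesh_def by auto
  have hullI: "convex hull (X ` To) \<inter> convex hull (X ` Tn) = convex hull (X ` (To \<inter> Tn))"
    using mesh To Tn unfolding conforming_simplicial_mesh_def by blast
  have finTo: "finite To" using cTo card.infinite by force
  have finTn: "finite Tn" using cTn card.infinite by force
  have injU: "inj_on X (\<Union>cells)" using mesh unfolding conforming_simplicial_mesh_def by blast
  have injo: "inj_on X To" using injU To by (meson Union_upper inj_on_subset)
  have "card (To - Tn) = 1" using card_Diff_subset_Int[of To Tn] finTo cTo cI by simp
  then obtain a where a: "To - Tn = {a}" by (rule card_1_singletonE)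
  have "card (Tn - To) = 1" using card_Diff_subset_Int[of Tn To] finTn cTn cI
    by (simp add: Int_commute)
  then obtain b where b: "Tn - To = {b}" by (rule card_1_singletonE)
  define F where "F = To \<inter> Tn"
  have aTo: "a \<in> To" "a \<notin> Tn" and bTn: "b \<in> Tn" "b \<notin> To" using a b by auto
  have To_eq: "To = insert a F" and Tn_eq: "Tn = insert b F" using a b by (auto simp: F_def)
  have aF: "a \<notin> F" and bF: "b \<notin> F" using aTo bTn by (auto simp: F_def)
  have finF: "finite F" and cF: "card F = DIM('a)" using finTo cI by (auto simp: F_def)
  have FTo: "F \<subseteq> To" and FTn: "F \<subseteq> Tn" by (auto simp: F_def)
  have injF: "inj_on X F" using injo FTo inj_on_subset by blast
  define B where "B = bary X To"
  have co: "\<And>x. isco X To x (B x)" unfolding B_def by (rule bary_isco[OF finTo injo indo cTo])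
  have eqB: "\<And>x C. isco X To x C \<Longrightarrow> B x = C" unfolding B_def by (rule bary_eq[OF finTo injo indo])
  have vert: "\<And>m. m \<in> To \<Longrightarrow> B (X m) = (\<lambda>n. if n = m then 1 else 0)"
  proof -
    fix m assume m: "m \<in> To"
    show "B (X m) = (\<lambda>n. if n = m then 1 else 0)"
      apply (rule eqB)
      using m finTo by (auto simp: isco_def if_distrib[where f="\<lambda>c. c *\<^sub>R _"] cong: if_cong)
  qed
  have Badd: "\<And>x y. B (x + y) = (\<lambda>n. B x n + B y n - B 0 n)"
  proof -
    fix x y
    show "B (x + y) = (\<lambda>n. B x n + B y n - B 0 n)"
      apply (rule eqB)
      using co[of x] co[of y] co[of 0]
      by (simp add: isco_def sum.distrib sum_subtractf scaleR_add_left scaleR_diff_left)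
  qed
  have Bsc: "\<And>x c. B (c *\<^sub>R x) = (\<lambda>n. c * B x n + (1 - c) * B 0 n)"
  proof -
    fix x c
    show "B (c *\<^sub>R x) = (\<lambda>n. c * B x n + (1 - c) * B 0 n)"
    proof (rule eqB)
      have e1: "(\<Sum>n\<in>To. c * B x n + (1-c) * B 0 n) = c * sum (B x) To + (1-c) * sum (B 0) To"
        by (simp add: sum.distrib sum_distrib_left)
      have e2: "(\<Sum>n\<in>To. (c * B x n + (1-c) * B 0 n) *\<^sub>R X n)
          = c *\<^sub>R (\<Sum>n\<in>To. B x n *\<^sub>R X n) + (1-c) *\<^sub>R (\<Sum>n\<in>To. B 0 n *\<^sub>R X n)"
        by (simp add: scaleR_add_left sum.distrib scaleR_sum_right)
      show "isco X To (c *\<^sub>R x) (\<lambda>n. c * B x n + (1 - c) * B 0 n)"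
        using co[of x] co[of 0] e1 e2 unfolding isco_def by simp
    qed
  qed
  define g where "g x = B x a" for x
  define L where "L v = g v - g 0" for v
  have "linear L"
    by (rule linearI) (simp_all add: L_def g_def Badd Bsc algebra_simps)
  then have "bounded_linear L" using linear_conv_bounded_linear by blast
  then obtain K where K: "\<And>v. norm (L v) \<le> norm v * K"
    using bounded_linear.bounded by blast
  have gpos: "g xo \<ge> 0" if xo: "xo \<in> convex hull (X ` To)" for xo
  proof -
    obtain u where u: "\<forall>y\<in>X ` To. 0 \<le> u y" "sum u (X ` To) = 1" "(\<Sum>y\<in>X ` To. u y *\<^sub>R y) = xo"
      using xo convex_hull_finite[of "X ` To"] finTo by auto
    define C where "C n = (if n \<in> To then u (X n) else 0)" for n
    have "isco X To xo C" using u injo by (simp add: isco_def C_def sum.reindex)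
    then have "B xo = C" by (rule eqB)
    then show ?thesis using u aTo by (simp add: g_def C_def)
  qed
  have gb: "g (X b) \<le> 0"
  proof (rule ccontr)
    assume "\<not> g (X b) \<le> 0"
    then have gbpos: "g (X b) > 0" by simp
    define \<beta> where "\<beta> = B (X b)"
    define M where "M = (\<Sum>n\<in>To. \<bar>\<beta> n\<bar>)"
    define d where "d = real DIM('a)"
    define t where "t = 1 / (1 + d * M)"
    have M0: "M \<ge> 0" by (simp add: M_def sum_nonneg)
    have d1: "d \<ge> 1" using DIM_positive[where 'a='a] by (simp add: d_def)
    have t0: "t > 0" using M0 d1 by (simp add: t_def add_pos_nonneg)
    have "1 \<le> 1 + d * M" using M0 d1 by simp
    then have t1: "t \<le> 1" by (simp add: t_def)
    have nz: "1 + d * M \<noteq> 0" "1 + M * d \<noteq> 0" using \<open>1 \<le> 1 + d * M\<close> by (auto simp: mult.commute)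
    have "1 - t = d * M * t" using nz by (simp add: t_def field_simps)
    then have tM: "(1 - t) / d = t * M" using d1 by simp
    have key: "(1 - t) / d + t * \<beta> f \<ge> 0" if f: "f \<in> F" for f
    proof -
      have "\<bar>\<beta> f\<bar> \<le> M" unfolding M_def
        using f FTo finTo by (intro member_le_sum) auto
      then have "t * \<bar>\<beta> f\<bar> \<le> t * M" using t0 by simp
      moreover have "- (t * \<beta> f) \<le> t * \<bar>\<beta> f\<bar>" using t0
        by (metis abs_ge_minus_self abs_mult abs_of_pos)
      ultimately show ?thesis using tM by linarith
    qed
    define q where "q = (1 - t) *\<^sub>R (\<Sum>f\<in>F. (1/d) *\<^sub>R X f) + t *\<^sub>R X b"
    define w where "w n = (if n \<in> F then (1-t)/d else if n = b then t else 0)" for n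
    have sumF: "sum (\<lambda>n. (1-t)/d) F = 1 - t" using cF d1 by (simp add: d_def)
    have wsum: "sum w Tn = 1"
    proof -
      have "sum w Tn = w b + sum w F" using Tn_eq finF bF by simp
      also have "sum w F = sum (\<lambda>n. (1-t)/d) F" by (rule sum.cong) (auto simp: w_def)
      finally show ?thesis using sumF bF by (simp add: w_def)
    qed
    have wvec: "(\<Sum>n\<in>Tn. w n *\<^sub>R X n) = q"
    proof -
      have "(\<Sum>n\<in>Tn. w n *\<^sub>R X n) = w b *\<^sub>R X b + (\<Sum>n\<in>F. w n *\<^sub>R X n)"
        using Tn_eq finF bF by simp
      also have "(\<Sum>n\<in>F. w n *\<^sub>R X n) = (\<Sum>n\<in>F. ((1-t)/d) *\<^sub>R X n)"
        by (rule sum.cong) (auto simp: w_def)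
      also have "\<dots> = (1 - t) *\<^sub>R (\<Sum>f\<in>F. (1/d) *\<^sub>R X f)"
        by (simp add: scaleR_sum_right)
      finally show ?thesis using bF by (simp add: w_def q_def)
    qed
    have qn: "q \<in> convex hull (X ` Tn)"
    proof -
      have "(\<Sum>n\<in>Tn. w n *\<^sub>R X n) \<in> convex hull (X ` Tn)"
        apply (rule convex_sum[OF finTn convex_convex_hull wsum])
        using t0 t1 d1 by (auto simp: w_def hull_inc)
      then show ?thesis using wvec by simp
    qed
    define Bq where "Bq n = (if n \<in> F then (1-t)/d else 0) + t * \<beta> n" for n
    have cob: "isco X To (X b) \<beta>" using co unfolding \<beta>_def by blast
    have s1: "sum (\<lambda>n. if n \<in> F then (1-t)/d else 0) To = 1 - t"
      using sumF FTo finTo by (simp add: sum.If_cases Int_absorb1)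
    have s2: "(\<Sum>n\<in>To. (if n \<in> F then (1-t)/d else 0) *\<^sub>R X n) = (1 - t) *\<^sub>R (\<Sum>f\<in>F. (1/d) *\<^sub>R X f)"
    proof -
      have "(\<Sum>n\<in>To. (if n \<in> F then (1-t)/d else 0) *\<^sub>R X n) = (\<Sum>n\<in>To. if n \<in> F then ((1-t)/d) *\<^sub>R X n else 0)"
        by (rule sum.cong) auto
      also have "\<dots> = (\<Sum>n\<in>F. ((1-t)/d) *\<^sub>R X n)"
        using FTo finTo by (simp add: sum.If_cases Int_absorb1)
      also have "\<dots> = (1 - t) *\<^sub>R (\<Sum>f\<in>F. (1/d) *\<^sub>R X f)"
        by (simp add: scaleR_sum_right)
      finally show ?thesis .
    qed
    have e3: "(\<Sum>n\<in>To. (t * \<beta> n) *\<^sub>R X n) = t *\<^sub>R X b"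
    proof -
      have "t *\<^sub>R X b = t *\<^sub>R (\<Sum>n\<in>To. \<beta> n *\<^sub>R X n)" using cob by (simp add: isco_def)
      also have "\<dots> = (\<Sum>n\<in>To. (t * \<beta> n) *\<^sub>R X n)" by (simp add: scaleR_sum_right)
      finally show ?thesis by simp
    qed
    have coq: "isco X To q Bq"
      using cob FTo s1 s2 e3 unfolding isco_def Bq_def q_def
      by (auto simp: sum.distrib scaleR_add_left sum_distrib_left[symmetric]
            scaleR_sum_right[symmetric])
    have Bqnn: "\<forall>n\<in>To. 0 \<le> Bq n"
    proof
      fix n assume n: "n \<in> To"
      show "0 \<le> Bq n"
      proof (cases "n \<in> F")
        case True then show ?thesis using key by (simp add: Bq_def)
      next
        case False
        then have "n = a" using n To_eq by auto
        then show ?thesis using gbpos t0 aF by (simp add: Bq_def \<beta>_def g_def)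
      qed
    qed
    have qo: "q \<in> convex hull (X ` To)"
    proof -
      have "(\<Sum>n\<in>To. Bq n *\<^sub>R X n) \<in> convex hull (X ` To)"
        apply (rule convex_sum[OF finTo convex_convex_hull])
        using coq Bqnn by (auto simp: isco_def hull_inc)
      then show ?thesis using coq by (simp add: isco_def)
    qed
    have "q \<in> convex hull (X ` F)" using qo qn hullI by (auto simp: F_def)
    then obtain u where u: "\<forall>y\<in>X ` F. 0 \<le> u y" "sum u (X ` F) = 1" "(\<Sum>y\<in>X ` F. u y *\<^sub>R y) = q"
      using convex_hull_finite[of "X ` F"] finF by auto
    define C where "C n = (if n \<in> F then u (X n) else 0)" for n
    have "sum C To = sum C F"
      using FTo finTo by (intro sum.mono_neutral_right) (auto simp: C_def)
    moreover have "(\<Sum>n\<in>To. C n *\<^sub>R X n) = (\<Sum>n\<in>F. C n *\<^sub>R X n)"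
      using FTo finTo by (intro sum.mono_neutral_right) (auto simp: C_def)
    moreover have "sum C F = 1" using u injF by (simp add: C_def sum.reindex)
    moreover have "(\<Sum>n\<in>F. C n *\<^sub>R X n) = q" using u injF by (simp add: C_def sum.reindex)
    ultimately have "isco X To q C" using FTo by (auto simp: isco_def C_def)
    then have "Bq = C" using isco_uniq[OF finTo injo indo coq] by blast
    then have "Bq a = 0" using aF by (simp add: C_def)
    moreover have "Bq a > 0" using gbpos t0 aF by (simp add: Bq_def \<beta>_def g_def)
    ultimately show False by simp
  qed
  have gneg: "g xn \<le> 0" if xn: "xn \<in> convex hull (X ` Tn)" for xn
  proof -
    obtain u where u: "\<forall>y\<in>X ` Tn. 0 \<le> u y" "sum u (X ` Tn) = 1" "(\<Sum>y\<in>X ` Tn. u y *\<^sub>R y) = xn"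
      using xn convex_hull_finite[of "X ` Tn"] finTn by auto
    have injn: "inj_on X Tn" using injU Tn by (meson Union_upper inj_on_subset)
    define w where "w m = u (X m)" for m
    have w: "\<forall>m\<in>Tn. 0 \<le> w m" "sum w Tn = 1" "(\<Sum>m\<in>Tn. w m *\<^sub>R X m) = xn"
      using u injn by (auto simp: w_def sum.reindex)
    define C where "C n = (\<Sum>m\<in>Tn. w m * B (X m) n)" for n
    have "isco X To xn C"
    proof -
      have o: "\<forall>n. n \<notin> To \<longrightarrow> C n = 0" using co by (simp add: C_def isco_def)
      have "sum C To = (\<Sum>m\<in>Tn. w m * sum (B (X m)) To)"
        unfolding C_def by (simp add: sum.swap[of _ To] sum_distrib_left)
      also have "\<dots> = 1" using co w by (simp add: isco_def)
      finally have s: "sum C To = 1" .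
      have "(\<Sum>n\<in>To. C n *\<^sub>R X n) = (\<Sum>m\<in>Tn. w m *\<^sub>R (\<Sum>n\<in>To. B (X m) n *\<^sub>R X n))"
        unfolding C_def by (simp add: scaleR_sum_left scaleR_sum_right sum.swap[of _ To])
      also have "\<dots> = xn" using co w by (simp add: isco_def)
      finally show ?thesis using o s by (simp add: isco_def)
    qed
    then have "B xn = C" by (rule eqB)
    then have "g xn = (\<Sum>m\<in>Tn. w m * g (X m))" by (simp add: g_def C_def)
    also have "\<dots> \<le> 0"
    proof (rule sum_nonpos)
      fix m assume m: "m \<in> Tn"
      show "w m * g (X m) \<le> 0"
      proof (cases "m = b")
        case True then show ?thesis using gb w m by (simp add: mult_nonneg_nonpos)
      next
        case False
        then have "m \<in> To" "m \<noteq> a" using m Tn_eq FTo aTo by auto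
        then show ?thesis using vert by (simp add: g_def)
      qed
    qed
    finally show ?thesis .
  qed
  show ?thesis
  proof (intro exI ballI)
    fix xo xn i
    assume xo: "xo \<in> convex hull (X ` To)" and xn: "xn \<in> convex hull (X ` Tn)"
      and i: "i \<in> one_ring cells To - one_ring cells Tn"
    have adj0: "adj cells i v = 0" if v: "v \<in> Tn" for v
    proof -
      have "i \<in> \<Union>cells" using i by (simp add: one_ring_def)
      then have "adj cells i v \<noteq> 1" using i v by (auto simp: one_ring_def)
      then show ?thesis by (simp add: adj_def split: if_splits)
    qed
    have "eta X cells To i xo = B xo a * adj cells i a + (\<Sum>n\<in>F. B xo n * adj cells i n)"
      unfolding eta_def B_def using To_eq finF aF by simp
    also have "(\<Sum>n\<in>F. B xo n * adj cells i n) = 0"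
      using adj0 FTn by (intro sum.neutral) auto
    finally have e: "eta X cells To i xo = g xo * adj cells i a" by (simp add: g_def)
    have "\<bar>eta X cells To i xo\<bar> \<le> g xo" using e gpos[OF xo] by (simp add: adj_def abs_mult)
    also have "\<dots> \<le> g xo - g xn" using gneg[OF xn] by simp
    also have "\<dots> = L (xo - xn)" using linear_diff[OF \<open>linear L\<close>, of xo xn] by (simp add: L_def)
    also have "\<dots> \<le> norm (L (xo - xn))" by simp
    also have "\<dots> \<le> K * norm (xn - xo)" using K[of "xo - xn"] by (simp add: norm_minus_commute mult.commute)
    finally show "\<bar>eta X cells To i xo\<bar> \<le> K * norm (xn - xo)" .
  qed
qed

theorem mainTheorem2:
  fixes X :: "'i \<Rightarrow> 'a::euclidean_space" and cells :: "'i set set" and To Tn :: "'i set"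
  assumes "conforming_simplicial_mesh X cells"
    and "To \<in> cells" and "Tn \<in> cells" and "To \<noteq> Tn"
    and "card (To \<inter> Tn) = DIM('a)"
  shows "\<exists>C. \<forall>xo\<in>convex hull (X ` To). \<forall>xn\<in>convex hull (X ` Tn).
           (\<forall>i\<in>one_ring cells To - one_ring cells Tn.
               \<bar>eta X cells To i xo\<bar> \<le> C * norm (xn - xo)) \<and>
           (\<forall>i\<in>one_ring cells Tn - one_ring cells To.
               \<bar>eta X cells Tn i xn\<bar> \<le> C * norm (xn - xo))"
proof -
  obtain K1 where K1: "\<forall>xo\<in>convex hull (X ` To). \<forall>xn\<in>convex hull (X ` Tn).
           \<forall>i\<in>one_ring cells To - one_ring cells Tn. \<bar>eta X cells To i xo\<bar> \<le> K1 * norm (xn - xo)"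
    using one_side[OF assms(1,2,3,5)] by blast
  obtain K2 where K2: "\<forall>xo\<in>convex hull (X ` Tn). \<forall>xn\<in>convex hull (X ` To).
           \<forall>i\<in>one_ring cells Tn - one_ring cells To. \<bar>eta X cells Tn i xo\<bar> \<le> K2 * norm (xn - xo)"
    using one_side[OF assms(1,3,2)] assms(5) by (metis Int_commute)
  show ?thesis
  proof (intro exI[of _ "max K1 K2"] ballI conjI)
    fix xo xn i
    assume xo: "xo \<in> convex hull (X ` To)" and xn: "xn \<in> convex hull (X ` Tn)"
    have n0: "norm (xn - xo) \<ge> 0" by simp
    {
      assume i: "i \<in> one_ring cells To - one_ring cells Tn"
      have "\<bar>eta X cells To i xo\<bar> \<le> K1 * norm (xn - xo)" using K1 xo xn i by blast
      also have "\<dots> \<le> max K1 K2 * norm (xn - xo)" using n0 by (intro mult_right_mono) auto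
      finally show "\<bar>eta X cells To i xo\<bar> \<le> max K1 K2 * norm (xn - xo)" .
    }
    {
      assume i: "i \<in> one_ring cells Tn - one_ring cells To"
      have "\<bar>eta X cells Tn i xn\<bar> \<le> K2 * norm (xo - xn)" using K2 xo xn i by blast
      also have "\<dots> = K2 * norm (xn - xo)" by (simp add: norm_minus_commute)
      also have "\<dots> \<le> max K1 K2 * norm (xn - xo)" using n0 by (intro mult_right_mono) auto
      finally show "\<bar>eta X cells Tn i xn\<bar> \<le> max K1 K2 * norm (xn - xo)" .
    }
  qed
qed

end
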